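(* Fix $\epsilon_2>0$ and $(u_\pm,v_\pm)$ with $v_\pm>0$ and $u_->u_++2\epsilon_2$, and let $v_*^{\epsilon_2}$ be the intermediate density of the two-shock Riemann solution (for small $\epsilon_1>0$). Then $$\lim_{\epsilon_1\to0}\sqrt{\epsilon_2^2+4\epsilon_1(v_*^{\epsilon_2}+v_-)^2}=\lim_{\epsilon_1\to0}\sqrt{\epsilon_2^2+4\epsilon_1(v_*^{\epsilon_2}+v_+)^2}=\frac{u_--u_+}{2}.$$
   Context: Perturbed Brio system: $u_t+(\tfrac12u^2+\tfrac12\epsilon_1v^2)_x=0$, $v_t+(uv-\epsilon_2v)_x=0$, $\epsilon_1,\epsilon_2>0$, $v>0$. The two-shock intermediate state $(u_*,v_* )$ satisfies $v_*>\max(v_-,v_+)$, $u_+<u_*<u_-$, $$u_*=u_-+(v_*-v_-)\frac{\epsilon_2-\sqrt{\epsilon_2^2+4\epsilon_1(v_*+v_-)^2}}{v_*+v_-},\qquad u_+=u_*+(v_+-v_* )\frac{\epsilon_2+\sqrt{\epsilon_2^2+4\epsilon_1(v_*+v_+)^2}}{v_*+v_+}.$$ *)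

theory Defs
  imports Complex_Main
begin

text \<open>Two-shock intermediate state (u_s, v_s) of the perturbed Brio system with
parameters e1, e2, connecting left state (um, vm) to right state (up, vp).\<close>
definition two_shock_state ::
  "real \<Rightarrow> real \<Rightarrow> real \<Rightarrow> real \<Rightarrow> real \<Rightarrow> real \<Rightarrow> real \<Rightarrow> real \<Rightarrow> bool" where
  "two_shock_state e1 e2 um vm up vp us vs \<longleftrightarrow>
     vs > max vm vp \<and> up < us \<and> us < um \<and>
     us = um + (vs - vm) * (e2 - sqrt (e2^2 + 4 * e1 * (vs + vm)^2)) / (vs + vm) \<and>
     up = us + (vp - vs) * (e2 + sqrt (e2^2 + 4 * e1 * (vs + vp)^2)) / (vs + vp)"

end

theory Submission
  imports Defs
begin

lemma core:
  fixes e1 e2 um vm up vp us s :: real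
  assumes e1: "e1 > 0" and e2: "e2 > 0" and vm: "vm > 0" and vp: "vp > 0" and D2: "um > up + 2*e2"
    and sv: "s > max vm vp" and upus: "up < us" and usum: "us < um"
    and hus: "us = um + (s - vm) * (e2 - sqrt (e2^2 + 4 * e1 * (s + vm)^2)) / (s + vm)"
    and hup: "up = us + (vp - s) * (e2 + sqrt (e2^2 + 4 * e1 * (s + vp)^2)) / (s + vp)"
    and small: "sqrt e1 * (8 * max vm vp) \<le> sqrt (((um-up)^2/4 - e2^2)/4)"
  shows "\<bar>sqrt (e2^2 + 4 * e1 * (s + vm)^2) - (um-up)/2\<bar> \<le>
           (4*(vm+vp)*(um-up)/sqrt (((um-up)^2/4 - e2^2)/4) + 12*\<bar>vm-vp\<bar>) * sqrt e1
       \<and> \<bar>sqrt (e2^2 + 4 * e1 * (s + vp)^2) - (um-up)/2\<bar> \<le>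
           (4*(vm+vp)*(um-up)/sqrt (((um-up)^2/4 - e2^2)/4) + 12*\<bar>vm-vp\<bar>) * sqrt e1"
proof -
  define D where "D = um - up"
  define c where "c = max vm vp"
  define \<delta> where "\<delta> = (D^2/4 - e2^2)/4"
  define A where "A = sqrt (e2^2 + 4 * e1 * (s + vm)^2)"
  define B where "B = sqrt (e2^2 + 4 * e1 * (s + vp)^2)"
  define Q where "Q = sqrt (e2^2 + 4 * e1 * (s + c)^2)"
  define a where "a = (s - vm)/(s + vm)"
  define b where "b = (s - vp)/(s + vp)"
  have Dpos: "D > 2*e2" using D2 D_def by simp
  have dpos: "\<delta> > 0"
  proof -
    have "D^2 > (2*e2)^2" using Dpos e2 by (intro power_strict_mono) auto
    thus ?thesis unfolding \<delta>_def by (simp add: power_mult_distrib)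
  qed
  have svm: "s > vm" "s > vp" "s > c" "c \<ge> vm" "c \<ge> vp" "c > 0" using sv vm vp unfolding c_def by auto
  have h1: "um - us = a*(A-e2)" using hus svm vm unfolding A_def[symmetric] a_def by (simp add: field_simps)
  have h2: "us - up = b*(B+e2)" using hup svm vp unfolding B_def[symmetric] b_def by (simp add: field_simps)
  have hD: "D = a*(A-e2) + b*(B+e2)" using h1 h2 D_def by simp
  have Age: "A \<ge> e2" unfolding A_def using e1 e2 real_sqrt_le_mono[of "e2^2" "e2^2 + 4 * e1 * (s + vm)^2"] by simp
  have Bge: "B \<ge> e2" unfolding B_def using e1 e2 real_sqrt_le_mono[of "e2^2" "e2^2 + 4 * e1 * (s + vp)^2"] by simp
  have a01: "0 < a" "a < 1" unfolding a_def using svm vm by (auto simp: field_simps)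
  have b01: "0 < b" "b < 1" unfolding b_def using svm vp by (auto simp: field_simps)
  have ABD: "A + B \<ge> D"
  proof -
    have "a*(A-e2) \<le> A - e2" using a01 Age by (simp add: mult_left_le_one_le)
    moreover have "b*(B+e2) \<le> B + e2" using b01 Bge e2 by (simp add: mult_left_le_one_le)
    ultimately show ?thesis using hD by linarith
  qed
  have AQ: "A \<le> Q" unfolding A_def Q_def using svm vm e1
    by (intro real_sqrt_le_mono add_left_mono mult_left_mono power_mono) auto
  have BQ: "B \<le> Q" unfolding B_def Q_def using svm vp e1
    by (intro real_sqrt_le_mono add_left_mono mult_left_mono power_mono) auto
  have "Q \<ge> D/2" using AQ BQ ABD by linarith
  hence "Q^2 \<ge> (D/2)^2" using Dpos e2 by (intro power_mono) auto
  hence "e2^2 + 4 * e1 * (s + c)^2 \<ge> (D/2)^2" unfolding Q_def using e1 by (simp add: real_sqrt_pow2 add_nonneg_nonneg)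
  hence ed: "e1 * (s+c)^2 \<ge> \<delta>" unfolding \<delta>_def by (simp add: power_divide)
  have sc1: "s + c \<ge> sqrt \<delta> / sqrt e1"
  proof -
    have "sqrt \<delta> \<le> sqrt (e1 * (s+c)^2)" using ed by simp
    also have "\<dots> = sqrt e1 * (s + c)" using svm by (simp add: real_sqrt_mult)
    finally show ?thesis using e1 by (simp add: divide_le_eq mult.commute)
  qed
  have inv: "1 / (s + c) \<le> sqrt e1 / sqrt \<delta>"
    using sc1 dpos e1 svm by (simp add: field_simps)
  have am: "1 - a \<le> 4*vm * (sqrt e1 / sqrt \<delta>)"
  proof -
    have "1 - a = 2*vm/(s+vm)" unfolding a_def using svm vm by (simp add: field_simps)
    also have "\<dots> \<le> 4*vm/(s+c)" proof -
      have "2*vm/(s+vm) = 4*vm/(2*(s+vm))" using svm vm by (simp add: field_simps)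
      also have "\<dots> \<le> 4*vm/(s+c)" using svm vm by (intro frac_le) auto
      finally show ?thesis .
    qed
    also have "\<dots> = 4*vm * (1/(s+c))" by simp
    also have "\<dots> \<le> 4*vm * (sqrt e1 / sqrt \<delta>)" using inv vm by (intro mult_left_mono) auto
    finally show ?thesis .
  qed
  have bm: "1 - b \<le> 4*vp * (sqrt e1 / sqrt \<delta>)"
  proof -
    have "1 - b = 2*vp/(s+vp)" unfolding b_def using svm vp by (simp add: field_simps)
    also have "\<dots> \<le> 4*vp/(s+c)" proof -
      have "2*vp/(s+vp) = 4*vp/(2*(s+vp))" using svm vp by (simp add: field_simps)
      also have "\<dots> \<le> 4*vp/(s+c)" using svm vp by (intro frac_le) auto
      finally show ?thesis .
    qed
    also have "\<dots> = 4*vp * (1/(s+c))" by simp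
    also have "\<dots> \<le> 4*vp * (sqrt e1 / sqrt \<delta>)" using inv vp by (intro mult_left_mono) auto
    finally show ?thesis .
  qed
  have sm: "sqrt e1 / sqrt \<delta> * (8*c) \<le> 1" using small dpos unfolding \<delta>_def[symmetric] D_def[symmetric] c_def[symmetric]
    by (simp add: field_simps)
  have X0: "sqrt e1 / sqrt \<delta> \<ge> 0" using e1 dpos by simp
  have "vm * (sqrt e1 / sqrt \<delta>) \<le> c * (sqrt e1 / sqrt \<delta>)" using svm X0 by (intro mult_right_mono) auto
  moreover have "4*vm*(sqrt e1 / sqrt \<delta>) = 4*(vm*(sqrt e1 / sqrt \<delta>))" "sqrt e1 / sqrt \<delta> * (8 * c) = 8*(c*(sqrt e1 / sqrt \<delta>))" by simp_all
  ultimately have ahalf: "a \<ge> 1/2" using am sm by linarith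
  have "vp * (sqrt e1 / sqrt \<delta>) \<le> c * (sqrt e1 / sqrt \<delta>)" using svm X0 by (intro mult_right_mono) auto
  moreover have "4*vp*(sqrt e1 / sqrt \<delta>) = 4*(vp*(sqrt e1 / sqrt \<delta>))" "sqrt e1 / sqrt \<delta> * (8 * c) = 8*(c*(sqrt e1 / sqrt \<delta>))" by simp_all
  ultimately have bhalf: "b \<ge> 1/2" using bm sm by linarith
  have "b*(B+e2) \<ge> 0" using b01 Bge e2 by simp
  hence "a*(A-e2) \<le> D" using hD by linarith
  moreover have "(1/2)*(A-e2) \<le> a*(A-e2)" using ahalf Age by (intro mult_right_mono) auto
  ultimately have A2: "A - e2 \<le> 2*D" by argo
  have A3: "A \<le> 3*D" using A2 Dpos e2 by linarith
  have "a*(A-e2) \<ge> 0" using a01 Age by simp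
  hence "b*(B+e2) \<le> D" using hD by linarith
  moreover have "(1/2)*(B+e2) \<le> b*(B+e2)" using bhalf Bge e2 by (intro mult_right_mono) auto
  ultimately have B2: "B + e2 \<le> 2*D" by argo
  define X where "X = sqrt e1 / sqrt \<delta>"
  have gap0: "(A+B) - D = (1-a)*(A-e2) + (1-b)*(B+e2)" using hD by (simp add: algebra_simps)
  have g1: "(1-a)*(A-e2) \<le> (4*vm*X)*(2*D)" unfolding X_def
    using am A2 Age a01 Dpos e2 by (intro mult_mono) auto
  have g2: "(1-b)*(B+e2) \<le> (4*vp*X)*(2*D)" unfolding X_def
    using bm B2 Bge b01 Dpos e2 by (intro mult_mono) auto
  have gap: "(A+B) - D \<le> 8*(vm+vp)*D*X" using gap0 g1 g2 by (simp add: algebra_simps)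
  have Asq: "A^2 = e2^2 + 4 * e1 * (s + vm)^2" unfolding A_def using e1 by (simp add: add_nonneg_nonneg)
  have Bsq: "B^2 = e2^2 + 4 * e1 * (s + vp)^2" unfolding B_def using e1 by (simp add: add_nonneg_nonneg)
  have diff: "(A-B)*(A+B) = 4*e1*(vm-vp)*(2*s+vm+vp)"
  proof -
    have "(A-B)*(A+B) = A^2 - B^2" by (simp add: algebra_simps power2_eq_square)
    also have "\<dots> = 4*e1*(vm-vp)*(2*s+vm+vp)" unfolding Asq Bsq by (simp add: algebra_simps power2_eq_square)
    finally show ?thesis .
  qed
  have "e1*(s+c)^2 \<le> 4*e1*(s+vm)^2"
  proof -
    have "(s+c)^2 \<le> (2*(s+vm))^2" using svm vm by (intro power_mono) auto
    also have "(2*(s+vm))^2 = 4*(s+vm)^2" by (simp only: power_mult_distrib) simp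
    finally show ?thesis using e1 by simp
  qed
  also have "\<dots> \<le> A^2" unfolding Asq by simp
  also have "\<dots> \<le> (3*D)^2" using A3 Age e2 by (intro power_mono) auto
  finally have "sqrt (e1*(s+c)^2) \<le> sqrt ((3*D)^2)" by (rule real_sqrt_le_mono)
  hence "sqrt e1 * (s+c) \<le> 3*D" using svm Dpos e2 by (simp add: real_sqrt_mult)
  hence "sqrt e1 * (sqrt e1 * (s+c)) \<le> sqrt e1 * (3*D)" using e1 by (intro mult_left_mono) auto
  moreover have "sqrt e1 * (sqrt e1 * (s+c)) = e1*(s+c)" using e1
    by (simp only: mult.assoc[symmetric] real_sqrt_mult_self)
  ultimately have esc: "e1 * (s+c) \<le> 3*D*sqrt e1" by (simp add: mult.commute)
  have "\<bar>A-B\<bar>*D \<le> \<bar>A-B\<bar>*(A+B)" using ABD by (intro mult_left_mono) auto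
  also have "\<dots> = \<bar>4*e1*(vm-vp)*(2*s+vm+vp)\<bar>" 
  proof -
    have "A+B \<ge> 0" using ABD Dpos e2 by linarith
    hence "\<bar>A-B\<bar>*(A+B) = \<bar>(A-B)*(A+B)\<bar>" by (simp add: abs_mult)
    thus ?thesis using diff by simp
  qed
  also have "\<dots> = 4*\<bar>vm-vp\<bar>*(e1*(2*s+vm+vp))" using e1 svm vm vp by (simp add: abs_mult)
  also have "\<dots> \<le> 4*\<bar>vm-vp\<bar>*(2*(3*D*sqrt e1))"
  proof -
    have "e1*(2*s+vm+vp) \<le> e1*(2*(s+c))" using svm e1 by (intro mult_left_mono) auto
    moreover have "e1*(2*(s+c)) = 2*(e1*(s+c))" by simp
    ultimately have "e1*(2*s+vm+vp) \<le> 2*(3*D*sqrt e1)" using esc by linarith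
    thus ?thesis by (intro mult_left_mono) auto
  qed
  finally have "\<bar>A-B\<bar>*D \<le> (24*\<bar>vm-vp\<bar>*sqrt e1)*D" by (simp add: algebra_simps)
  hence AB: "\<bar>A-B\<bar> \<le> 24*\<bar>vm-vp\<bar>*sqrt e1" using Dpos e2 by simp
  have K: "(4*(vm+vp)*D/sqrt \<delta> + 12*\<bar>vm-vp\<bar>) * sqrt e1 = 4*(vm+vp)*D*X + 12*\<bar>vm-vp\<bar>*sqrt e1"
    unfolding X_def by (simp add: algebra_simps add_divide_distrib)
  have "\<bar>A - D/2\<bar> \<le> (4*(vm+vp)*D/sqrt \<delta> + 12*\<bar>vm-vp\<bar>) * sqrt e1"
       "\<bar>B - D/2\<bar> \<le> (4*(vm+vp)*D/sqrt \<delta> + 12*\<bar>vm-vp\<bar>) * sqrt e1"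
    unfolding K using gap AB ABD by linarith+
  thus ?thesis unfolding A_def B_def \<delta>_def D_def by simp
qed

theorem lemma6p2:
  fixes e2 um vm up vp :: real and vstar :: "real \<Rightarrow> real"
  assumes "e2 > 0" and "vm > 0" and "vp > 0" and "um > up + 2 * e2"
    and "\<forall>\<^sub>F e1 in at_right 0. \<exists>us. two_shock_state e1 e2 um vm up vp us (vstar e1)"
  shows "((\<lambda>e1. sqrt (e2^2 + 4 * e1 * (vstar e1 + vm)^2)) \<longlongrightarrow> (um - up) / 2) (at_right 0) \<and>
     ((\<lambda>e1. sqrt (e2^2 + 4 * e1 * (vstar e1 + vp)^2)) \<longlongrightarrow> (um - up) / 2) (at_right 0)"
proof -
  define \<delta> where "\<delta> = ((um-up)^2/4 - e2^2)/4"
  define K where "K = 4*(vm+vp)*(um-up)/sqrt \<delta> + 12*\<bar>vm-vp\<bar>"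
  define c where "c = max vm vp"
  have cpos: "c > 0" using assms unfolding c_def by auto
  have dpos: "\<delta> > 0"
  proof -
    have "(um-up)^2 > (2*e2)^2" using assms by (intro power_strict_mono) auto
    thus ?thesis unfolding \<delta>_def by (simp add: power_mult_distrib)
  qed
  have sq: "((\<lambda>x. sqrt x) \<longlongrightarrow> 0) (at_right (0::real))"
    using tendsto_real_sqrt[OF tendsto_ident_at[of "0::real" "{0<..}"]] by simp
  have ev1: "\<forall>\<^sub>F e1 in at_right 0. sqrt e1 < sqrt \<delta> / (8*c)"
    using order_tendstoD(2)[OF sq] dpos cpos by simp
  have ev: "\<forall>\<^sub>F e1 in at_right 0.
      \<bar>sqrt (e2^2 + 4 * e1 * (vstar e1 + vm)^2) - (um-up)/2\<bar> \<le> K * sqrt e1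
    \<and> \<bar>sqrt (e2^2 + 4 * e1 * (vstar e1 + vp)^2) - (um-up)/2\<bar> \<le> K * sqrt e1"
    using ev1 assms(5) eventually_at_right_less[of "0::real"]
  proof eventually_elim
    case (elim e1)
    then obtain us where ts: "two_shock_state e1 e2 um vm up vp us (vstar e1)" by blast
    have smf: "sqrt e1 * (8 * max vm vp) \<le> sqrt (((um-up)^2/4 - e2^2)/4)"
      using elim(1) cpos unfolding c_def[symmetric] \<delta>_def[symmetric] by (simp add: field_simps)
    have t: "vstar e1 > max vm vp" "up < us" "us < um"
      "us = um + (vstar e1 - vm) * (e2 - sqrt (e2^2 + 4 * e1 * (vstar e1 + vm)^2)) / (vstar e1 + vm)"
      "up = us + (vp - vstar e1) * (e2 + sqrt (e2^2 + 4 * e1 * (vstar e1 + vp)^2)) / (vstar e1 + vp)"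
      using ts unfolding two_shock_state_def by auto
    from core[OF elim(3) assms(1-4) t smf]
    show ?case unfolding K_def \<delta>_def .
  qed
  have g0: "((\<lambda>x. sqrt x) \<longlongrightarrow> 0) (at_right (0::real))" by (rule sq)
  have "((\<lambda>e1. sqrt (e2^2 + 4 * e1 * (vstar e1 + vm)^2) - (um - up) / 2) \<longlongrightarrow> 0) (at_right 0)"
    apply (rule tendsto_0_le[OF g0, where K=K])
    using ev eventually_at_right_less[of "0::real"] by eventually_elim (auto simp: mult.commute)
  moreover have "((\<lambda>e1. sqrt (e2^2 + 4 * e1 * (vstar e1 + vp)^2) - (um - up) / 2) \<longlongrightarrow> 0) (at_right 0)"
    apply (rule tendsto_0_le[OF g0, where K=K])
    using ev eventually_at_right_less[of "0::real"] by eventually_elim (auto simp: mult.commute)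
  ultimately show ?thesis by (auto dest: LIM_zero_cancel)
qed

end
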